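(* For every $n\in\mathbb{N}$, with $N=4^n$ the number of vertices, the diameter $D_n$ of $\mathcal{T}_n$ is $$D_n=\frac{2\sqrt{N}-1}{3}=\frac{2^{n+1}-1}{3}\ \text{ if } n \text{ is odd},\qquad D_n=\frac{2(\sqrt{N}-1)}{3}=\frac{2(2^{n}-1)}{3}\ \text{ if } n \text{ is even}.$$
   Context: For $n\in\mathbb{N}$ let $G_n=\mathbb{Z}_{2^n}\times\mathbb{Z}_{2^n}$ (additive group), so $|G_n|=N=4^n$. Let $S^+=\{(-1,-1),(1,0),(0,1)\}$ and $S=S^+\cup(-S^+)=\{\pm(1,0),\pm(0,1),\pm(1,1)\}$. The undirected graph $\mathcal{T}_n$ (the undirected "arrowhead", equivalently the undirected "diamond") is the Cayley graph $\Gamma(G_n,S)$: its vertex set is $G_n$ and each vertex $u$ is adjacent to $u+s$ for every $s\in S$ (arithmetic modulo $2^n$ in each coordinate). The diameter of a graph is the maximum, over all pairs of vertices, of the length of a shortest path between them. ($\mathcal{T}_0$ is a single vertex.) *)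

theory Defs
  imports Main
begin

text \<open>Vertex set of T_n: the group Z_{2^n} x Z_{2^n}, represented by pairs of
  canonical residues in {0..<2^n}.\<close>
definition verts :: "nat \<Rightarrow> (int \<times> int) set" where
  "verts n = {0..<2^n} \<times> {0..<2^n}"

definition gens :: "(int \<times> int) set" where
  "gens = {(1,0), (-1,0), (0,1), (0,-1), (1,1), (-1,-1)}"

definition adj :: "nat \<Rightarrow> int \<times> int \<Rightarrow> int \<times> int \<Rightarrow> bool" where
  "adj n u v \<longleftrightarrow> u \<in> verts n \<and> v \<in> verts n \<and>
     (\<exists>s\<in>gens. fst v = (fst u + fst s) mod 2^n \<and> snd v = (snd u + snd s) mod 2^n)"

definition gdist :: "nat \<Rightarrow> int \<times> int \<Rightarrow> int \<times> int \<Rightarrow> nat" where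
  "gdist n u v = (LEAST k. (adj n ^^ k) u v)"

definition diameter :: "nat \<Rightarrow> nat" where
  "diameter n = Max {gdist n u v | u v. u \<in> verts n \<and> v \<in> verts n}"

end

theory Submission
  imports Defs
begin

definition hn :: "int \<Rightarrow> int \<Rightarrow> int" where
  "hn a b = max \<bar>a\<bar> (max \<bar>b\<bar> \<bar>a - b\<bar>)"

lemma hn_nonneg: "hn a b \<ge> 0" by (simp add: hn_def)

lemma descent:
  assumes "hn a b = int (Suc k)"
  shows "\<exists>s\<in>gens. hn (a - fst s) (b - snd s) = int k"
proof -
  consider "a > 0 \<and> b > 0" | "a < 0 \<and> b < 0" | "a > 0 \<and> b \<le> 0" | "a < 0 \<and> b \<ge> 0"
    | "a = 0 \<and> b > 0" | "a = 0 \<and> b < 0" | "a = 0 \<and> b = 0" by linarith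
  then show ?thesis
  proof cases
    case 1 show ?thesis by (rule bexI[of _ "(1,1)"]) (use 1 assms in \<open>auto simp: gens_def hn_def\<close>)
  next
    case 2 show ?thesis by (rule bexI[of _ "(-1,-1)"]) (use 2 assms in \<open>auto simp: gens_def hn_def\<close>)
  next
    case 3 show ?thesis by (rule bexI[of _ "(1,0)"]) (use 3 assms in \<open>auto simp: gens_def hn_def\<close>)
  next
    case 4 show ?thesis by (rule bexI[of _ "(-1,0)"]) (use 4 assms in \<open>auto simp: gens_def hn_def\<close>)
  next
    case 5 show ?thesis by (rule bexI[of _ "(0,1)"]) (use 5 assms in \<open>auto simp: gens_def hn_def\<close>)
  next
    case 6 show ?thesis by (rule bexI[of _ "(0,-1)"]) (use 6 assms in \<open>auto simp: gens_def hn_def\<close>)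
  next
    case 7 with assms show ?thesis by (simp add: hn_def)
  qed
qed

lemma verts_mod: "u \<in> verts n \<Longrightarrow> fst u mod 2^n = fst u \<and> snd u mod 2^n = snd u"
  by (auto simp: verts_def)

lemma reach:
  assumes "u \<in> verts n" "hn a b = int k"
  shows "(adj n ^^ k) u ((fst u + a) mod 2^n, (snd u + b) mod 2^n)"
  using assms
proof (induction k arbitrary: u a b)
  case 0
  then have "a = 0" "b = 0" by (auto simp: hn_def)
  with verts_mod[OF 0(1)] show ?case by simp
next
  case (Suc k)
  obtain s where s: "s \<in> gens" "hn (a - fst s) (b - snd s) = int k"
    using descent[OF Suc(3)] by blast
  define w where "w = ((fst u + fst s) mod 2^n, (snd u + snd s) mod (2::int)^n)"
  have wv: "w \<in> verts n" by (simp add: w_def verts_def)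
  have aw: "adj n u w" using Suc(2) wv s(1) unfolding adj_def w_def by auto
  have IH: "(adj n ^^ k) w ((fst w + (a - fst s)) mod 2^n, (snd w + (b - snd s)) mod 2^n)"
    using Suc.IH[OF wv s(2)] .
  have e1: "(fst w + (a - fst s)) mod 2^n = (fst u + a) mod 2^n"
    unfolding w_def by (simp add: mod_add_left_eq)
  have e2: "(snd w + (b - snd s)) mod 2^n = (snd u + b) mod 2^n"
    unfolding w_def by (simp add: mod_add_left_eq)
  show ?case using relpowp_Suc_I2[OF aw IH] e1 e2 by simp
qed

lemma walk_lift:
  assumes "(adj n ^^ k) u v" "u \<in> verts n"
  shows "\<exists>a b. (fst u + a) mod 2^n = fst v \<and> (snd u + b) mod 2^n = snd v \<and> hn a b \<le> int k"
  using assms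
proof (induction k arbitrary: v)
  case 0
  then show ?case using verts_mod[OF 0(2)] by (intro exI[of _ 0]) (auto simp: hn_def)
next
  case (Suc k)
  from Suc(2) obtain w where w: "(adj n ^^ k) u w" "adj n w v" by (auto elim: relpowp_Suc_E)
  from Suc.IH[OF w(1) Suc(3)] obtain a b where ab: "(fst u + a) mod 2^n = fst w"
    "(snd u + b) mod 2^n = snd w" "hn a b \<le> int k" by blast
  from w(2) obtain s where s: "s \<in> gens" "fst v = (fst w + fst s) mod 2^n"
    "snd v = (snd w + snd s) mod 2^n" unfolding adj_def by blast
  have h: "hn (a + fst s) (b + snd s) \<le> hn a b + 1"
    using s(1) unfolding gens_def hn_def by auto
  have "(fst u + (a + fst s)) mod 2^n = fst v"
    using ab(1) s(2) by (metis add.assoc mod_add_left_eq)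
  moreover have "(snd u + (b + snd s)) mod 2^n = snd v"
    using ab(2) s(3) by (metis add.assoc mod_add_left_eq)
  ultimately show ?case using h ab(3) by (intro exI[of _ "a + fst s"] exI[of _ "b + snd s"]) auto
qed

lemma gdist_le:
  assumes "u \<in> verts n" "(fst u + a) mod 2^n = fst v" "(snd u + b) mod 2^n = snd v"
  shows "gdist n u v \<le> nat (hn a b)"
proof -
  have "(adj n ^^ nat (hn a b)) u ((fst u + a) mod 2^n, (snd u + b) mod 2^n)"
    using reach[OF assms(1)] hn_nonneg by simp
  then have "(adj n ^^ nat (hn a b)) u v" using assms(2,3) by (metis prod.collapse)
  then show ?thesis unfolding gdist_def by (rule Least_le)
qed

lemma gdist_ge:
  assumes "u \<in> verts n" "v \<in> verts n"
  shows "\<exists>a b. (fst u + a) mod 2^n = fst v \<and> (snd u + b) mod 2^n = snd v \<and> hn a b \<le> int (gdist n u v)"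
proof -
  have "(adj n ^^ nat (hn (fst v - fst u) (snd v - snd u))) u
         ((fst u + (fst v - fst u)) mod 2^n, (snd u + (snd v - snd u)) mod 2^n)"
    by (rule reach[OF assms(1)]) (simp add: hn_nonneg)
  then have "(adj n ^^ nat (hn (fst v - fst u) (snd v - snd u))) u v"
    using verts_mod[OF assms(2)] by simp
  then have "(adj n ^^ gdist n u v) u v" unfolding gdist_def by (rule LeastI)
  then show ?thesis using walk_lift assms(1) by blast
qed

lemma upper_cases:
  fixes x y m D :: int
  assumes "0 \<le> x" "x < m" "0 \<le> y" "y < m" "2*m - 2 \<le> 3*D"
  shows "hn x y \<le> D \<or> hn (x-m) (y-m) \<le> D \<or> hn (x-m) y \<le> D \<or> hn x (y-m) \<le> D"
proof -
  have h1: "hn x y = max x y" using assms by (auto simp: hn_def max_def)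
  have h2: "hn (x-m) (y-m) = max (m-x) (m-y)" using assms by (auto simp: hn_def max_def)
  have h3: "hn (x-m) y = m - x + y" using assms by (auto simp: hn_def max_def)
  have h4: "hn x (y-m) = m - y + x" using assms by (auto simp: hn_def max_def)
  show ?thesis unfolding h1 h2 h3 h4 using assms by (auto simp: max_def)
qed

lemma lower_case:
  fixes i j m D :: int
  assumes "0 \<le> D" "3*D \<le> 2*m" "m \<ge> 1"
  shows "hn (m*i - D) (m*j + D) \<ge> D"
proof -
  have A: "\<bar>m*i - D\<bar> \<ge> D \<or> i = 1"
  proof -
    consider "i \<le> -1" | "i = 0" | "i = 1" | "i \<ge> 2" by linarith
    then show ?thesis
    proof cases
      case 1 then have "m*i \<le> m*(-1)" using assms by (intro mult_left_mono) auto
      then show ?thesis using assms by auto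
    next
      case 4 then have "m*i \<ge> m*2" using assms by (intro mult_left_mono) auto
      then show ?thesis using assms by linarith
    qed (use assms in auto)
  qed
  have B: "\<bar>m*j + D\<bar> \<ge> D \<or> j = -1"
  proof -
    consider "j \<le> -2" | "j = 0" | "j = -1" | "j \<ge> 1" by linarith
    then show ?thesis
    proof cases
      case 1 then have "m*j \<le> m*(-2)" using assms by (intro mult_left_mono) auto
      then show ?thesis using assms by linarith
    next
      case 4 then have "m*j \<ge> m*1" using assms by (intro mult_left_mono) auto
      then show ?thesis using assms by linarith
    qed (use assms in auto)
  qed
  show ?thesis using A B assms unfolding hn_def by auto
qed

lemma pow2_mod3: "(2::nat)^n mod 3 = (if even n then 1 else 2)"
proof (induction n)
  case (Suc n)
  have "(2::nat)^Suc n mod 3 = (2 * (2^n mod 3)) mod 3" by (simp add: mod_mult_right_eq)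
  then show ?case using Suc by auto
qed simp

lemma diameter_eq: "diameter n = (2 * 2^n) div 3"
proof -
  define D :: nat where "D = (2 * 2^n) div 3"
  define m :: int where "m = 2^n"
  have m1: "m \<ge> 1" by (simp add: m_def)
  define r :: nat where "r = (2*2^n) mod 3"
  have "3 * D + r = 2*2^n" unfolding D_def r_def by simp
  then have "int (3 * D + r) = int (2*2^n)" by simp
  then have "3 * int D + int r = 2*m" unfolding m_def by simp
  moreover have "r < 3" unfolding r_def by simp
  ultimately have Db: "3 * int D \<le> 2*m" "2*m - 2 \<le> 3 * int D" by linarith+
  have Dm: "int D < m" using Db m1 by linarith
  let ?A = "{gdist n u v | u v. u \<in> verts n \<and> v \<in> verts n}"
  have up: "gdist n u v \<le> D" if uv: "u \<in> verts n" "v \<in> verts n" for u v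
  proof -
    define x where "x = (fst v - fst u) mod m"
    define y where "y = (snd v - snd u) mod m"
    have xy: "0 \<le> x" "x < m" "0 \<le> y" "y < m" using m1 by (simp_all add: x_def y_def)
    have c1a: "(fst u + x) mod 2^n = fst v"
      using verts_mod[OF uv(2)] unfolding x_def m_def by (simp add: mod_add_right_eq)
    have c1b: "(fst u + (x - m)) mod 2^n = fst v"
    proof -
      have "fst u + (x - m) = (fst u + x) - m" by simp
      then show ?thesis using c1a unfolding m_def by (simp only: minus_mod_self2)
    qed
    have c2a: "(snd u + y) mod 2^n = snd v"
      using verts_mod[OF uv(2)] unfolding y_def m_def by (simp add: mod_add_right_eq)
    have c2b: "(snd u + (y - m)) mod 2^n = snd v"
    proof -
      have "snd u + (y - m) = (snd u + y) - m" by simp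
      then show ?thesis using c2a unfolding m_def by (simp only: minus_mod_self2)
    qed
    have k: "gdist n u v \<le> D" if "hn a b \<le> int D" "(fst u + a) mod 2^n = fst v"
      "(snd u + b) mod 2^n = snd v" for a b
    proof -
      have "gdist n u v \<le> nat (hn a b)" using gdist_le[OF uv(1) that(2,3)] .
      also have "\<dots> \<le> D" using that(1) by simp
      finally show ?thesis .
    qed
    from upper_cases[OF xy Db(2)] show ?thesis
    proof (elim disjE)
      assume "hn x y \<le> int D" then show ?thesis using k c1a c2a by blast
    next
      assume "hn (x-m) (y-m) \<le> int D" then show ?thesis using k c1b c2b by blast
    next
      assume "hn (x-m) y \<le> int D" then show ?thesis using k c1b c2a by blast
    next
      assume "hn x (y-m) \<le> int D" then show ?thesis using k c1a c2b by blast
    qed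
  qed
  define v where "v = ((m - int D) mod m, int D)"
  have v: "v \<in> verts n" using Dm m1 by (simp add: v_def verts_def m_def)
  have z: "(0,0) \<in> verts n" by (simp add: verts_def)
  have lo: "gdist n (0,0) v \<ge> D"
  proof -
    obtain a b where ab: "a mod m = (m - int D) mod m" "b mod m = int D" "hn a b \<le> int (gdist n (0,0) v)"
      using gdist_ge[OF z v] unfolding v_def m_def by auto
    have "m dvd a - (m - int D)" using mod_eq_dvd_iff[THEN iffD1, OF ab(1)] .
    then have "m dvd (a - (m - int D)) + m" by (rule dvd_add) simp
    moreover have "(a - (m - int D)) + m = a + int D" by simp
    ultimately have "m dvd a + int D" by simp
    then obtain i where i: "a + int D = m * i" by (elim dvdE)
    have "b mod m = int D mod m" using ab(2) Dm by simp
    then have "m dvd b - int D" by (simp add: mod_eq_dvd_iff)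
    then obtain j where j: "b - int D = m * j" by (auto elim!: dvdE)
    have "a = m*i - int D" "b = m*j + int D" using i j by linarith+
    then have "hn a b \<ge> int D" using lower_case[of "int D" m i j] Db m1 by simp
    then show ?thesis using ab(3) by linarith
  qed
  have fin: "finite ?A" by (rule finite_subset[of _ "{..D}"]) (auto dest: up)
  have "Max ?A = D"
  proof (rule Max_eqI[OF fin])
    show "y \<le> D" if "y \<in> ?A" for y using that up by auto
    have "gdist n (0,0) v \<le> D" using up[OF z v] .
    then have "gdist n (0,0) v = D" using lo by simp
    then show "D \<in> ?A" using z v by (metis (mono_tags, lifting) mem_Collect_eq)
  qed
  then show ?thesis unfolding diameter_def D_def by simp
qed

theorem proposition1:
  fixes n :: nat
  shows "(odd n \<longrightarrow> 3 * diameter n = 2^(n+1) - 1) \<and>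
         (even n \<longrightarrow> 3 * diameter n = 2 * (2^n - 1))"
proof -
  have e: "3 * diameter n = 2*2^n - (2*2^n) mod 3"
    unfolding diameter_eq by (simp add: minus_mod_eq_mult_div)
  have "(2::nat)*2^n mod 3 = (if even n then 2 else 1)"
    using pow2_mod3[of "Suc n"] by simp
  then show ?thesis using e by (auto simp: right_diff_distrib')
qed

end
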